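(* Let $k\ge 2$ be an integer such that $\mathbb{Z}_k$ is an integral domain (i.e. $k$ is prime), let $q\in\{1,\dots,k-1\}$, $n\ge 3$ and $i\ge 1$ be integers, and let $\alpha(k)$ be the restricted period of the Fibonacci sequence modulo $k$. Consider the cylindrical Lights Out game on a board with $i$ rows and $n$ columns whose lights have $k$ states, with every light initially in the same state $k-q$. Then the game is one-pass solvable if and only if $i\equiv 0 \pmod{\alpha(k)}$ or $i\equiv -1 \pmod{\alpha(k)}$.
   Context: Fibonacci numbers: $F_0=0$, $F_1=1$, $F_i=F_{i-1}+F_{i-2}$. The restricted period $\alpha(k)$ is the least positive integer $m$ such that $F_m\equiv 0\pmod k$. Cylindrical Lights Out game: a grid of buttons with $i$ rows (numbered $1,\dots,i$ from top to bottom) and $n$ columns, whose left and right sides are identified, so column $1$ and column $n$ are adjacent; rows do not wrap around. Each button has a light whose state is an element of $\mathbb{Z}/k\mathbb{Z}$, state $0$ meaning "off". Pressing a button once adds $1 \pmod k$ to the state of its own light and to the states of the lights orthogonally adjacent to it (above, below, left, right, where they exist, with columns taken cyclically). One-pass chasing: for $r=2,3,\dots,i$ in turn, press each button in row $r$ the number of times in $\{0,\dots,k-1\}$ needed to bring the light directly above it (in row $r-1$) to state $0$. The game is one-pass solvable if after this procedure all lights on the board are in state $0$. *)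

theory Defs
  imports Main "HOL-Number_Theory.Fib" "HOL-Computational_Algebra.Primes"
begin

definition restricted_period :: "nat \<Rightarrow> nat" where
  "restricted_period k = (LEAST m. 0 < m \<and> k dvd fib m)"

text \<open>Board states: rows 1..i, columns 0..n-1 (cyclic), light values in {0..k-1}
  (elements of Z/kZ represented by their least nonnegative residue).\<close>
type_synonym board = "nat \<Rightarrow> nat \<Rightarrow> int"

definition affected :: "nat \<Rightarrow> nat \<Rightarrow> nat \<Rightarrow> nat \<Rightarrow> nat \<Rightarrow> nat \<Rightarrow> bool" where
  "affected i n r c r' c' \<longleftrightarrow>
     (1 \<le> r' \<and> r' \<le> i \<and> c' < n) \<and>
     ((r' = r \<and> c' = c) \<or>
      (c' = c \<and> (r' = r + 1 \<or> r' + 1 = r)) \<or>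
      (r' = r \<and> (c' = (c + 1) mod n \<or> c = (c' + 1) mod n)))"

definition press :: "nat \<Rightarrow> nat \<Rightarrow> nat \<Rightarrow> nat \<Rightarrow> nat \<Rightarrow> board \<Rightarrow> board" where
  "press k i n r c s = (\<lambda>r' c'. if affected i n r c r' c' then (s r' c' + 1) mod int k else s r' c')"

text \<open>Chasing step for button (r,c): press it the number of times in {0..k-1}
  needed to turn the light directly above to state 0.\<close>
definition chase_button :: "nat \<Rightarrow> nat \<Rightarrow> nat \<Rightarrow> nat \<Rightarrow> nat \<Rightarrow> board \<Rightarrow> board" where
  "chase_button k i n r c s = (press k i n r c ^^ nat ((int k - s (r - 1) c) mod int k)) s"

definition chase_row :: "nat \<Rightarrow> nat \<Rightarrow> nat \<Rightarrow> nat \<Rightarrow> board \<Rightarrow> board" where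
  "chase_row k i n r s = fold (chase_button k i n r) [0..<n] s"

definition one_pass :: "nat \<Rightarrow> nat \<Rightarrow> nat \<Rightarrow> board \<Rightarrow> board" where
  "one_pass k i n s = fold (chase_row k i n) [2..<i+1] s"

definition one_pass_solvable :: "nat \<Rightarrow> nat \<Rightarrow> nat \<Rightarrow> board \<Rightarrow> bool" where
  "one_pass_solvable k i n s \<longleftrightarrow>
     (\<forall>r c. 1 \<le> r \<and> r \<le> i \<and> c < n \<longrightarrow> one_pass k i n s r c = 0)"

end

theory Submission
  imports Defs "HOL-Number_Theory.Number_Theory"
begin


lemma fib_back:
  assumes "fib (Suc a) mod k = fib (Suc b) mod k" "fib (Suc (Suc a)) mod k = fib (Suc (Suc b)) mod k"
  shows "fib a mod k = fib b mod k"
proof -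
  have "[fib (Suc a) + fib a = fib (Suc b) + fib b] (mod k)"
    using assms(2) by (simp add: cong_def)
  moreover have "[fib (Suc a) = fib (Suc b)] (mod k)" using assms(1) by (simp add: cong_def)
  ultimately have "[fib a = fib b] (mod k)"
    using cong_add_lcancel_nat[of "fib (Suc b)" "fib a" "fib b" k]
    by (meson cong_add_rcancel_nat cong_trans cong_sym cong_add cong_refl)
  thus ?thesis by (simp add: cong_def)
qed

lemma fib_shift_back:
  assumes "fib a mod k = fib b mod k" "fib (Suc a) mod k = fib (Suc b) mod k" "d \<le> a" "a \<le> b"
  shows "fib (a - d) mod k = fib (b - d) mod k \<and> fib (Suc (a - d)) mod k = fib (Suc (b - d)) mod k"
  using assms(3)
proof (induction d)
  case 0 then show ?case using assms by simp
next
  case (Suc d)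
  then have IH: "fib (a - d) mod k = fib (b - d) mod k \<and> fib (Suc (a - d)) mod k = fib (Suc (b - d)) mod k" by simp
  obtain a' where a': "a - d = Suc a'" using Suc.prems by (metis Suc_diff_Suc Suc_le_lessD)
  have "b - d \<ge> Suc a'" using a' assms(4) by arith
  then obtain b' where b': "b - d = Suc b'" by (metis Suc_le_D)
  have "fib a' mod k = fib b' mod k"
    using fib_back[of a' k b'] IH a' b' by auto
  moreover have "a - Suc d = a'" "b - Suc d = b'" using a' b' by auto
  ultimately show ?case using IH a' b' by auto
qed

lemma fib_zero_exists:
  assumes "k > 0"
  shows "\<exists>m>0. k dvd fib m"
proof -
  define f where "f m = (fib m mod k, fib (Suc m) mod k)" for m
  have "f ` {0..k*k} \<subseteq> {0..<k} \<times> {0..<k}" using assms by (auto simp: f_def)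
  then have "card (f ` {0..k*k}) \<le> card ({0..<k} \<times> {0..<k})"
    by (intro card_mono) auto
  then have "card (f ` {0..k*k}) \<le> k * k" by (simp add: card_cartesian_product)
  then have "\<not> inj_on f {0..k*k}"
    using card_image by fastforce
  then obtain a b where ab: "a \<in> {0..k*k}" "b \<in> {0..k*k}" "a \<noteq> b" "f a = f b"
    unfolding inj_on_def by blast
  then have "\<exists>a b. a < b \<and> f a = f b" by (metis linorder_neqE_nat)
  then obtain a b where ab: "a < b" "f a = f b" by blast
  then have "fib (a - a) mod k = fib (b - a) mod k"
    using fib_shift_back[of a k b a] by (auto simp: f_def)
  then have "k dvd fib (b - a)" by (simp add: mod_eq_0_iff_dvd[symmetric] )
  moreover have "b - a > 0" using ab by simp
  ultimately show ?thesis by blast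
qed

lemma alpha_dvd_iff:
  assumes "k > 0"
  shows "k dvd fib m \<longleftrightarrow> restricted_period k dvd m"
proof -
  let ?a = "restricted_period k"
  have ex: "\<exists>m>0. k dvd fib m" using fib_zero_exists assms by blast
  have a: "?a > 0 \<and> k dvd fib ?a" unfolding restricted_period_def
    using LeastI_ex[of "\<lambda>m. 0 < m \<and> k dvd fib m"] ex by blast
  have amin: "\<And>m. 0 < m \<Longrightarrow> k dvd fib m \<Longrightarrow> ?a \<le> m" unfolding restricted_period_def
    by (simp add: Least_le)
  show ?thesis
  proof
    assume h: "k dvd fib m"
    show "?a dvd m"
    proof (cases "m = 0")
      case True then show ?thesis by simp
    next
      case False
      have "k dvd fib (gcd m ?a)" using h a by (simp add: fib_gcd)
      moreover have "gcd m ?a > 0" using a by simp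
      ultimately have "?a \<le> gcd m ?a" using amin by blast
      moreover have "gcd m ?a \<le> ?a" using a by (simp add: gcd_le2_nat)
      ultimately have "gcd m ?a = ?a" by simp
      then show ?thesis by (metis gcd_dvd1)
    qed
  next
    assume "?a dvd m"
    then have "gcd ?a m = ?a" by (simp add: gcd_nat.absorb1)
    then have "fib ?a dvd fib m" by (metis fib_gcd gcd_dvd2)
    then show "k dvd fib m" using a dvd_trans by blast
  qed
qed


definition eff :: "nat \<Rightarrow> (nat \<Rightarrow> nat \<Rightarrow> int) \<Rightarrow> nat \<Rightarrow> nat \<Rightarrow> int" where
  "eff n p r c = p r c + p (r - 1) c + p (r + 1) c + p r ((c + 1) mod n) + p r ((c + n - 1) mod n)"

definition bof :: "nat \<Rightarrow> nat \<Rightarrow> nat \<Rightarrow> int \<Rightarrow> (nat \<Rightarrow> nat \<Rightarrow> int) \<Rightarrow> board" where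
  "bof k i n s p = (\<lambda>r c. if 1 \<le> r \<and> r \<le> i \<and> c < n then (s + eff n p r c) mod int k else s)"

definition upd :: "(nat \<Rightarrow> nat \<Rightarrow> int) \<Rightarrow> nat \<Rightarrow> nat \<Rightarrow> int \<Rightarrow> (nat \<Rightarrow> nat \<Rightarrow> int)" where
  "upd p r c v = (\<lambda>r' c'. if r' = r \<and> c' = c then v else p r' c')"

lemma upd_val: "upd p r c (p r c + d) a b = p a b + (if a = r \<and> b = c then d else 0)"
  by (simp add: upd_def)

lemma mod_succ: "(c::nat) < n \<Longrightarrow> (c + 1) mod n = (if c + 1 = n then 0 else c + 1)"
  by (cases "c + 1 = n") auto

lemma mod_pred: "(c::nat) < n \<Longrightarrow> (c + n - 1) mod n = (if c = 0 then n - 1 else c - 1)"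
proof -
  assume "c < n"
  show ?thesis
  proof (cases "c = 0")
    case True
    have "n - 1 < n" using \<open>c < n\<close> by simp
    then show ?thesis using True by simp
  next
    case False
    then have e: "c + n - 1 = (c - 1) + n" by simp
    have "(c + n - 1) mod n = ((c - 1) + n) mod n" by (simp only: e)
    also have "\<dots> = (c - 1) mod n" by simp
    also have "\<dots> = c - 1" using \<open>c < n\<close> by simp
    finally show ?thesis using False by simp
  qed
qed

lemma col_facts:
  assumes "(n::nat) \<ge> 3" "c < n" "c' < n"
  shows "(c' + 1) mod n \<noteq> c'" "(c' + n - 1) mod n \<noteq> c'" "(c' + 1) mod n \<noteq> (c' + n - 1) mod n"
    "((c' + n - 1) mod n = c) \<longleftrightarrow> (c' = (c + 1) mod n)"
  using assms by (simp_all only: mod_succ[OF assms(3)] mod_succ[OF assms(2)] mod_pred[OF assms(3)]) auto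

lemma eff_upd:
  assumes "n \<ge> 3" "c < n" "c' < n" "r' \<ge> 1"
  shows "eff n (upd p r c (p r c + d)) r' c' = eff n p r' c' +
    (if (r' = r \<and> c' = c) \<or> (c' = c \<and> (r' = r + 1 \<or> r' + 1 = r)) \<or>
        (r' = r \<and> (c' = (c + 1) mod n \<or> c = (c' + 1) mod n)) then d else 0)"
proof -
  note cf = col_facts[OF assms(1-3)]
  have "eff n (upd p r c (p r c + d)) r' c' = eff n p r' c' +
     ((if r' = r \<and> c' = c then d else 0) + (if r' - 1 = r \<and> c' = c then d else 0)
     + (if r' + 1 = r \<and> c' = c then d else 0) + (if r' = r \<and> (c' + 1) mod n = c then d else 0)
     + (if r' = r \<and> (c' + n - 1) mod n = c then d else 0))"
    unfolding eff_def upd_val by simp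
  also have "\<dots> = eff n p r' c' +
    (if (r' = r \<and> c' = c) \<or> (c' = c \<and> (r' = r + 1 \<or> r' + 1 = r)) \<or>
        (r' = r \<and> (c' = (c + 1) mod n \<or> c = (c' + 1) mod n)) then d else 0)"
    using cf assms(4) by (cases "r' = r"; cases "c' = c"; auto)
  finally show ?thesis .
qed

lemma press_bof:
  assumes "n \<ge> 3" "c < n"
  shows "press k i n r c (bof k i n s p) = bof k i n s (upd p r c (p r c + 1))"
proof (rule ext, rule ext)
  fix r' c'
  show "press k i n r c (bof k i n s p) r' c' = bof k i n s (upd p r c (p r c + 1)) r' c'"
  proof (cases "1 \<le> r' \<and> r' \<le> i \<and> c' < n")
    case True
    then show ?thesis using eff_upd[OF assms, of c' r' p r 1]
      unfolding press_def bof_def affected_def by (auto simp: mod_simps ac_simps)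
  next
    case False
    then show ?thesis unfolding press_def bof_def affected_def by auto
  qed
qed

lemma upd_upd[simp]: "upd (upd p r c v) r c w = upd p r c w"
  unfolding upd_def by (intro ext) auto

lemma upd_same[simp]: "upd p r c v r c = v"
  by (auto simp: upd_def)

lemma press_pow_bof:
  assumes "n \<ge> 3" "c < n"
  shows "(press k i n r c ^^ m) (bof k i n s p) = bof k i n s (upd p r c (p r c + int m))"
proof (induction m)
  case 0
  have "upd p r c (p r c) = p" unfolding upd_def by (intro ext) auto
  then show ?case by simp
next
  case (Suc m)
  then show ?case using press_bof[OF assms] by (simp add: ac_simps)
qed

lemma chase_bof:
  assumes "n \<ge> 3" "c < n"
  shows "chase_button k i n r c (bof k i n s p) =
    bof k i n s (upd p r c (p r c + int (nat ((int k - bof k i n s p (r - 1) c) mod int k))))"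
  unfolding chase_button_def using press_pow_bof[OF assms] by simp

lemma bof_cong:
  assumes "n > 0" "\<And>r c. c < n \<Longrightarrow> p r c = p' r c"
  shows "bof k i n s p = bof k i n s p'"
  unfolding bof_def eff_def using assms by (auto intro!: ext)



fun Aseq :: "int \<Rightarrow> int \<Rightarrow> nat \<Rightarrow> int" where
  "Aseq K s 0 = 0"
| "Aseq K s (Suc 0) = 0"
| "Aseq K s (Suc (Suc j)) = (- (s + Aseq K s j + 3 * Aseq K s (Suc j))) mod K"

definition Q :: "int \<Rightarrow> int \<Rightarrow> nat \<Rightarrow> nat \<Rightarrow> nat \<Rightarrow> nat \<Rightarrow> int" where
  "Q K s R m r c = (if r \<le> R \<or> (r = Suc R \<and> c < m) then Aseq K s r else 0)"

lemma Aseq_nonneg: "K > 0 \<Longrightarrow> Aseq K s j \<ge> 0"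
  by (cases "(K, s, j)" rule: Aseq.cases) simp_all

lemma mod_aux2: "((s::int) + (P + y mod K)) mod K = (s + P + y) mod K"
  by (metis add.assoc mod_add_right_eq)

lemma row_step:
  assumes "n \<ge> 3" "k \<ge> 2" "1 \<le> R" "Suc R \<le> i" "m < n"
  shows "chase_button k i n (Suc R) m (bof k i n s (Q k s R m)) = bof k i n s (Q k s R (Suc m))"
proof -
  obtain R' where R': "R = Suc R'" using assms(3) by (cases R) auto
  have n0: "n > 0" using assms by simp
  have b: "bof k i n s (Q k s R m) R m = (s + (Aseq k s R' + 3 * Aseq k s R)) mod int k"
  proof -
    have "bof k i n s (Q k s R m) R m = (s + eff n (Q k s R m) R m) mod int k"
      using assms by (simp add: bof_def)
    moreover have "eff n (Q k s R m) R m = Aseq k s R' + 3 * Aseq k s R"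
      unfolding eff_def by (simp add: Q_def R')
    ultimately show ?thesis by simp
  qed
  have "(int k - bof k i n s (Q k s R m) (Suc R - 1) m) mod int k = Aseq k s (Suc R)"
    using b R' by (simp add: mod_simps algebra_simps)
  moreover have "Q k s R m (Suc R) m = 0" by (simp add: Q_def)
  moreover have "upd (Q k s R m) (Suc R) m (Aseq k s (Suc R)) = Q k s R (Suc m)"
    unfolding upd_def Q_def by (intro ext) auto
  moreover have "Aseq k s (Suc R) \<ge> 0" using assms Aseq_nonneg by simp
  ultimately show ?thesis using chase_bof[OF assms(1,5), of k i "Suc R" s "Q k s R m"] by simp
qed

lemma row_fold:
  assumes "n \<ge> 3" "k \<ge> 2" "1 \<le> R" "Suc R \<le> i" "m \<le> n"
  shows "fold (chase_button k i n (Suc R)) [0..<m] (bof k i n s (Q k s R 0)) = bof k i n s (Q k s R m)"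
  using assms(5)
proof (induction m)
  case 0 then show ?case by simp
next
  case (Suc m)
  then show ?case using row_step[OF assms(1-4), of m s] by simp
qed

lemma row_full:
  assumes "n \<ge> 3" "k \<ge> 2" "1 \<le> R" "Suc R \<le> i"
  shows "chase_row k i n (Suc R) (bof k i n s (Q k s R 0)) = bof k i n s (Q k s (Suc R) 0)"
proof -
  have "chase_row k i n (Suc R) (bof k i n s (Q k s R 0)) = bof k i n s (Q k s R n)"
    unfolding chase_row_def using row_fold[OF assms, of n s] by simp
  also have "\<dots> = bof k i n s (Q k s (Suc R) 0)"
    by (rule bof_cong) (use assms in \<open>auto simp: Q_def\<close>)
  finally show ?thesis .
qed

lemma rows_fold:
  assumes "n \<ge> 3" "k \<ge> 2" "1 \<le> R" "R \<le> i"
  shows "fold (chase_row k i n) [2..<Suc R] (bof k i n s (Q k s 1 0)) = bof k i n s (Q k s R 0)"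
  using assms(3,4)
proof (induction R)
  case 0 then show ?case by simp
next
  case (Suc R)
  show ?case
  proof (cases "R = 0")
    case True then show ?thesis by simp
  next
    case False
    then have "[2..<Suc (Suc R)] = [2..<Suc R] @ [Suc R]" by simp
    then show ?thesis using Suc False row_full[OF assms(1,2), of R i s] by simp
  qed
qed

lemma final_state:
  assumes "n \<ge> 3" "k \<ge> 2" "1 \<le> i"
  shows "one_pass_solvable k i n (bof k i n s (Q k s 1 0)) \<longleftrightarrow> Aseq k s (Suc i) = 0"
proof -
  have op: "one_pass k i n (bof k i n s (Q k s 1 0)) = bof k i n s (Q k s i 0)"
    unfolding one_pass_def using rows_fold[OF assms(1,2,3), of i s] by simp
  have val: "bof k i n s (Q k s i 0) r c =
     (s + (Aseq k s (r - 1) + 3 * Aseq k s r + (if r < i then Aseq k s (Suc r) else 0))) mod int k"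
    if "1 \<le> r" "r \<le> i" "c < n" for r c
    using that assms unfolding bof_def eff_def Q_def by (simp add: algebra_simps)
  have zero: "bof k i n s (Q k s i 0) r c = 0" if h: "1 \<le> r" "r < i" "c < n" for r c
  proof -
    obtain r' where r': "r = Suc r'" using h by (cases r) auto
    show ?thesis using val[of r c] h r' by (simp add: mod_aux2)
  qed
  obtain i' where i': "i = Suc i'" using assms by (cases i) auto
  define X where "X = s + Aseq k s i' + 3 * Aseq k s (Suc i')"
  have last: "bof k i n s (Q k s i 0) i c = 0 \<longleftrightarrow> Aseq k s (Suc i) = 0" if "c < n" for c
  proof -
    have e1: "bof k i n s (Q k s i 0) i c = X mod int k"
      using val[of i c] that assms i' by (simp add: X_def add.assoc)
    have e2: "Aseq k s (Suc i) = (- X) mod int k"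
      unfolding X_def by (simp only: i' Aseq.simps)
    have "X mod int k = 0 \<longleftrightarrow> (- X) mod int k = 0"
      by (simp add: dvd_eq_mod_eq_0[symmetric])
    then show ?thesis using e1 e2 by simp
  qed
  show ?thesis
    unfolding one_pass_solvable_def op
  proof
    assume "\<forall>r c. 1 \<le> r \<and> r \<le> i \<and> c < n \<longrightarrow> bof k i n s (Q k s i 0) r c = 0"
    then have "bof k i n s (Q k s i 0) i 0 = 0" using assms by simp
    then show "Aseq k s (Suc i) = 0" using last[of 0] assms by simp
  next
    assume "Aseq k s (Suc i) = 0"
    then show "\<forall>r c. 1 \<le> r \<and> r \<le> i \<and> c < n \<longrightarrow> bof k i n s (Q k s i 0) r c = 0"
      using zero last by (metis le_neq_implies_less)
  qed
qed



definition aval :: "int \<Rightarrow> nat \<Rightarrow> int" where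
  "aval s j = (-1) ^ (j + 1) * int (fib (j - 1) * fib j) * s"

lemma aval_rec: "aval s (Suc (Suc j)) = - (s + aval s j + 3 * aval s (Suc j))"
proof (cases j)
  case 0 then show ?thesis by (simp add: aval_def)
next
  case (Suc m)
  define x where "x = int (fib m)"
  define y where "y = int (fib (Suc m))"
  define e where "e = ((-1::int) ^ m)"
  have z: "int (fib (Suc (Suc m))) = x + y" by (simp add: x_def y_def)
  have w: "int (fib (Suc (Suc (Suc m)))) = x + 2 * y" by (simp add: x_def y_def)
  have C: "(x + y) * x - y ^ 2 = - e"
    using fib_Cassini_int[of m] unfolding x_def y_def e_def by (simp add: ac_simps)
  have ee: "e * e = 1" unfolding e_def by (simp add: power_mult_distrib[symmetric])
  have ms: "- s = e * s * ((x + y) * x - y ^ 2)" using C ee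
    by (metis mult.assoc mult.commute mult_minus_right mult_1 )
  have lhs: "aval s (Suc (Suc j)) = e * ((x + y) * (x + 2 * y)) * s"
    unfolding aval_def Suc using z w by (simp add: e_def ac_simps)
  have r1: "aval s j = e * (x * y) * s"
    unfolding aval_def Suc by (simp add: e_def x_def y_def)
  have r2: "aval s (Suc j) = - e * (y * (x + y)) * s"
    unfolding aval_def Suc using z by (simp add: e_def y_def)
  show ?thesis unfolding lhs r1 r2 using ms
    by (simp add: algebra_simps power2_eq_square)
qed

lemma Aseq_aval: "K > 0 \<Longrightarrow> Aseq K s j = aval s j mod K"
proof (induction K s j rule: Aseq.induct)
  case (1 K s) then show ?case by (simp add: aval_def)
next
  case (2 K s) then show ?case by (simp add: aval_def)
next
  case (3 K s j)
  have "Aseq K s (Suc (Suc j)) = (- (s + aval s j mod K + 3 * (aval s (Suc j) mod K))) mod K"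
    using 3 by simp
  also have "\<dots> = (- (s + aval s j + 3 * aval s (Suc j))) mod K"
  proof -
    have "[- (s + aval s j mod K + 3 * (aval s (Suc j) mod K)) = - (s + aval s j + 3 * aval s (Suc j))] (mod K)"
      by (intro cong_minus_minus_iff[THEN iffD2] cong_add cong_mult cong_refl) (simp_all add: cong_def)
    then show ?thesis by (simp add: cong_def)
  qed
  also have "\<dots> = aval s (Suc (Suc j)) mod K" by (simp add: aval_rec)
  finally show ?case .
qed


lemma initial_bof:
  assumes "k \<ge> 2" "1 \<le> q" "q \<le> k - 1"
  shows "(\<lambda>r c. int k - int q) = bof k i n (int k - int q) (Q (int k) (int k - int q) 1 0)"
proof -
  have q0: "Q (int k) (int k - int q) 1 0 = (\<lambda>_ _. 0)"
    unfolding Q_def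
  proof (intro ext)
    fix r c :: nat
    show "(if r \<le> 1 \<or> r = Suc 1 \<and> c < 0 then Aseq (int k) (int k - int q) r else 0) = 0"
      by (cases r rule: Aseq.cases[of "(int k, int k - int q, r)" for r]) (auto simp: le_Suc_eq)
  qed
  have "(int k - int q) mod int k = int k - int q" using assms by (intro mod_pos_pos_trivial) auto
  then show ?thesis unfolding bof_def q0 eff_def by (intro ext) simp
qed

theorem theorem4:
  fixes k q n i :: nat
  assumes "prime k"
    and "1 \<le> q" and "q \<le> k - 1"
    and "n \<ge> 3" and "i \<ge> 1"
  shows "one_pass_solvable k i n (\<lambda>r c. int k - int q) \<longleftrightarrow>
           (i mod restricted_period k = 0 \<or> (i + 1) mod restricted_period k = 0)"
proof -
  define s where "s = int k - int q"
  have k2: "k \<ge> 2" using assms(1) prime_ge_2_nat by blast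
  have s0: "0 < s" "s < int k" using assms k2 unfolding s_def by auto
  have pk: "prime (int k)" using assms(1) by simp
  have nd: "\<not> int k dvd s" using s0 zdvd_imp_le by fastforce
  have "one_pass_solvable k i n (\<lambda>r c. int k - int q) \<longleftrightarrow> Aseq (int k) s (Suc i) = 0"
    using initial_bof[OF k2 assms(2,3), of i n] final_state[OF assms(4) k2 assms(5), of s]
    unfolding s_def by simp
  also have "\<dots> \<longleftrightarrow> int k dvd aval s (Suc i)"
    using Aseq_aval[of "int k" s "Suc i"] k2 by (simp add: dvd_eq_mod_eq_0)
  also have "\<dots> \<longleftrightarrow> int k dvd (int (fib i) * int (fib (Suc i))) * s"
    unfolding aval_def by (cases "even i") (simp_all add: ac_simps)
  also have "\<dots> \<longleftrightarrow> int k dvd int (fib i) \<or> int k dvd int (fib (Suc i))"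
    using nd pk by (simp add: prime_dvd_mult_iff)
  also have "\<dots> \<longleftrightarrow> k dvd fib i \<or> k dvd fib (Suc i)"
    by (simp add: of_nat_dvd_iff)
  also have "\<dots> \<longleftrightarrow> restricted_period k dvd i \<or> restricted_period k dvd Suc i"
    using alpha_dvd_iff[of k] k2 by simp
  also have "\<dots> \<longleftrightarrow> (i mod restricted_period k = 0 \<or> (i + 1) mod restricted_period k = 0)"
    by (simp add: dvd_eq_mod_eq_0)
  finally show ?thesis .
qed

end
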